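(* Let $0<L<\widetilde{\mathrm{snr}}$, and let $$p_m=2Q\big(\sqrt{3L}\big),\qquad\text{equivalently}\qquad L=\tfrac13\left[Q^{-1}(p_m/2)\right]^2.$$ Run the scalar modulo scheme for $N$ rounds with a PAM constellation of $M=2^{NR}$ points and the parameters $\alpha,\beta_n,\gamma_n$ given in the context. Then: - each modulo-aliasing event of the coupled system has probability exactly $p_m$; - the error probability satisfies $$p_e\le (N-1)\,p_m+2Q\!\left(\sqrt{\frac{3\,\mathrm{snr}_N}{2^{2NR}-1}}\right),\qquad\text{where}\qquad \mathrm{snr}_N=\mathrm{snr}\left(1+\mathrm{snr}\cdot\frac{1-L\,\widetilde{\mathrm{snr}}^{-1}}{1+L\,\Delta^{-1}}\right)^{N-1}.$$
   Context: Notation. $Q(x)=\frac{1}{\sqrt{2\pi}}\int_x^\infty e^{-u^2/2}du$. Channels. Feedforward channel $Y_n=X_n+Z_n$ with $Z_n\sim\mathcal N(0,\sigma^2)$ and power $P$. Feedback channel $\widetilde Y_n=\widetilde X_n+\widetilde Z_n$ with $\widetilde Z_n\sim\mathcal N(0,\widetilde\sigma^2)$ and power $\widetilde P$. The noises are i.i.d., mutually independent and independent of the message. Set $\mathrm{snr}=P/\sigma^2$, $\widetilde{\mathrm{snr}}=\widetilde P/\widetilde\sigma^2$ and $\Delta=\widetilde{\mathrm{snr}}/\mathrm{snr}$. Modulo. $[x]_d:=x-d\cdot\mathrm{round}(x/d)$ with $d=\sqrt{12\widetilde P}$. Shared dithers $V_n$ are i.i.d. uniform on $[-d/2,d/2)$.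 PAM. The message is mapped to $\Theta\in\{\pm\eta,\dots,\pm(M-1)\eta\}$ with $\eta=\sqrt{3/(M^2-1)}$. Scalar modulo scheme. - $X_1=\sqrt P\Theta$, and $\hat\Theta_1=Y_1/\sqrt P$. - For $n=1,\dots,N-1$: - $\widetilde X_n=[\gamma_n\hat\Theta_n+V_n]_d$; - $\tilde\varepsilon_n=[\widetilde Y_n-\gamma_n\Theta-V_n]_d$; - $X_{n+1}=\alpha\tilde\varepsilon_n$; - $\hat\Theta_{n+1}=\hat\Theta_n-\beta_{n+1}Y_{n+1}$. - Terminal B decodes the PAM point nearest to $\hat\Theta_N$. Parameters: $$\alpha=\sqrt{LP/\widetilde P},\qquad \gamma_n=\sigma_n^{-1}\sqrt{\widetilde P/L-\widetilde\sigma^2},\qquad \beta_{n+1}=\frac{\sigma_n}{\sigma}\cdot\frac{\sqrt{\mathrm{snr}(1-L/\widetilde{\mathrm{snr}})}}{1+\mathrm{snr}},$$ with $$\sigma_n^2=\mathrm{snr}^{-1}\left(1+\mathrm{snr}\cdot\frac{1-L\widetilde{\mathrm{snr}}^{-1}}{1+L\Delta^{-1}}\right)^{1-n}.$$ Coupled system. This is the same system (same message, dithers and noise realizations) with all modulo operations removed. Its modulo-aliasing events are $\{\gamma_n\varepsilon'_n+\widetilde Z_n\notin[-d/2,d/2)\}$ for $n=1,\dots,N-1$, where $\varepsilon'_n$ is the estimation error $\hat\Theta'_n-\Theta$ of the coupled system. *)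

theory Defs
  imports "HOL-Probability.Probability"
begin

definition Qfun :: "real \<Rightarrow> real" where
  "Qfun x = (LBINT u:{x<..}. std_normal_density u)"

text \<open>Centred modulo [x]_d = x - d * round(x/d), values in [-d/2, d/2).\<close>
definition modd :: "real \<Rightarrow> real \<Rightarrow> real" where
  "modd d x = x - d * real_of_int (round (x / d))"

definition pam :: "nat \<Rightarrow> nat \<Rightarrow> real" where
  "pam M k = (2 * real k - (real M - 1)) * sqrt (3 / ((real M)\<^sup>2 - 1))"

text \<open>Channel quantities; sigma, sigmat are noise standard deviations.\<close>
definition snr :: "real \<Rightarrow> real \<Rightarrow> real" where
  "snr P \<sigma> = P / \<sigma>\<^sup>2"

definition Delta :: "real \<Rightarrow> real \<Rightarrow> real \<Rightarrow> real \<Rightarrow> real" where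
  "Delta P \<sigma> Pt \<sigma>t = snr Pt \<sigma>t / snr P \<sigma>"

definition dmod :: "real \<Rightarrow> real" where
  "dmod Pt = sqrt (12 * Pt)"

definition gfac :: "real \<Rightarrow> real \<Rightarrow> real \<Rightarrow> real \<Rightarrow> real \<Rightarrow> real" where
  "gfac P \<sigma> Pt \<sigma>t L =
     1 + snr P \<sigma> * (1 - L / snr Pt \<sigma>t) / (1 + L / Delta P \<sigma> Pt \<sigma>t)"

definition sig :: "real \<Rightarrow> real \<Rightarrow> real \<Rightarrow> real \<Rightarrow> real \<Rightarrow> nat \<Rightarrow> real" where
  "sig P \<sigma> Pt \<sigma>t L n =
     sqrt (inverse (snr P \<sigma>) * gfac P \<sigma> Pt \<sigma>t L powr (1 - real n))"

definition alpha :: "real \<Rightarrow> real \<Rightarrow> real \<Rightarrow> real" where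
  "alpha P Pt L = sqrt (L * P / Pt)"

definition gam :: "real \<Rightarrow> real \<Rightarrow> real \<Rightarrow> real \<Rightarrow> real \<Rightarrow> nat \<Rightarrow> real" where
  "gam P \<sigma> Pt \<sigma>t L n = sqrt (Pt / L - \<sigma>t\<^sup>2) / sig P \<sigma> Pt \<sigma>t L n"

text \<open>betaN ... n is beta_{n+1} of the paper.\<close>
definition betaN :: "real \<Rightarrow> real \<Rightarrow> real \<Rightarrow> real \<Rightarrow> real \<Rightarrow> nat \<Rightarrow> real" where
  "betaN P \<sigma> Pt \<sigma>t L n =
     sig P \<sigma> Pt \<sigma>t L n / \<sigma> * sqrt (snr P \<sigma> * (1 - L / snr Pt \<sigma>t)) / (1 + snr P \<sigma>)"

text \<open>Receiver estimate of the scheme, with modulo map md (md = modd d for the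
  actual scheme, md = id for the coupled system).
  est md ... theta v z zt m  is  hat Theta_{m+1}.\<close>
primrec est :: "(real \<Rightarrow> real) \<Rightarrow> real \<Rightarrow> real \<Rightarrow> real \<Rightarrow> real \<Rightarrow> real \<Rightarrow> real
    \<Rightarrow> (nat \<Rightarrow> real) \<Rightarrow> (nat \<Rightarrow> real) \<Rightarrow> (nat \<Rightarrow> real) \<Rightarrow> nat \<Rightarrow> real" where
  "est md P \<sigma> Pt \<sigma>t L \<theta> v z zt 0 = (sqrt P * \<theta> + z 1) / sqrt P"
| "est md P \<sigma> Pt \<sigma>t L \<theta> v z zt (Suc m) =
     (let n = Suc m;
          th = est md P \<sigma> Pt \<sigma>t L \<theta> v z zt m;
          Xt = md (gam P \<sigma> Pt \<sigma>t L n * th + v n);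
          Yt = Xt + zt n;
          et = md (Yt - gam P \<sigma> Pt \<sigma>t L n * \<theta> - v n);
          X = alpha P Pt L * et;
          Y = X + z (Suc n)
      in th - betaN P \<sigma> Pt \<sigma>t L n * Y)"

definition ThetaHat :: "(real \<Rightarrow> real) \<Rightarrow> real \<Rightarrow> real \<Rightarrow> real \<Rightarrow> real \<Rightarrow> real \<Rightarrow> real
    \<Rightarrow> (nat \<Rightarrow> real) \<Rightarrow> (nat \<Rightarrow> real) \<Rightarrow> (nat \<Rightarrow> real) \<Rightarrow> nat \<Rightarrow> real" where
  "ThetaHat md P \<sigma> Pt \<sigma>t L \<theta> v z zt n = est md P \<sigma> Pt \<sigma>t L \<theta> v z zt (n - 1)"

text \<open>Probability space: (message index, dithers V_n (n=1..N-1),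
  forward noises Z_n (n=1..N), feedback noises Zt_n (n=1..N-1)).
  Message uniform on {0..M-1}; everything independent.\<close>
definition scheme_space :: "nat \<Rightarrow> nat \<Rightarrow> real \<Rightarrow> real \<Rightarrow> real
    \<Rightarrow> (nat \<times> (nat \<Rightarrow> real) \<times> (nat \<Rightarrow> real) \<times> (nat \<Rightarrow> real)) measure" where
  "scheme_space M N Pt \<sigma> \<sigma>t =
     uniform_count_measure {..<M}
     \<Otimes>\<^sub>M (PiM {1..<N} (\<lambda>_. uniform_measure lborel {- dmod Pt / 2..<dmod Pt / 2})
     \<Otimes>\<^sub>M (PiM {1..N} (\<lambda>_. density lborel (normal_density 0 \<sigma>))
     \<Otimes>\<^sub>M PiM {1..<N} (\<lambda>_. density lborel (normal_density 0 \<sigma>t))))"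

definition alias_event :: "nat \<Rightarrow> nat \<Rightarrow> real \<Rightarrow> real \<Rightarrow> real \<Rightarrow> real \<Rightarrow> real \<Rightarrow> nat
    \<Rightarrow> (nat \<times> (nat \<Rightarrow> real) \<times> (nat \<Rightarrow> real) \<times> (nat \<Rightarrow> real)) set" where
  "alias_event M N P \<sigma> Pt \<sigma>t L n =
     {\<omega> \<in> space (scheme_space M N Pt \<sigma> \<sigma>t).
        case \<omega> of (k, v, z, zt) \<Rightarrow>
          gam P \<sigma> Pt \<sigma>t L n * (ThetaHat id P \<sigma> Pt \<sigma>t L (pam M k) v z zt n - pam M k) + zt n
            \<notin> {- dmod Pt / 2..<dmod Pt / 2}}"

text \<open>Decoding error event of the actual (modulo) scheme after N rounds:
  the transmitted PAM point is not the unique nearest point to hat Theta_N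
  (ties counted as errors).\<close>
definition error_event :: "nat \<Rightarrow> nat \<Rightarrow> real \<Rightarrow> real \<Rightarrow> real \<Rightarrow> real \<Rightarrow> real
    \<Rightarrow> (nat \<times> (nat \<Rightarrow> real) \<times> (nat \<Rightarrow> real) \<times> (nat \<Rightarrow> real)) set" where
  "error_event M N P \<sigma> Pt \<sigma>t L =
     {\<omega> \<in> space (scheme_space M N Pt \<sigma> \<sigma>t).
        case \<omega> of (k, v, z, zt) \<Rightarrow>
          (let th = ThetaHat (modd (dmod Pt)) P \<sigma> Pt \<sigma>t L (pam M k) v z zt N
           in \<not> (\<forall>j<M. j \<noteq> k \<longrightarrow> \<bar>th - pam M k\<bar> < \<bar>th - pam M j\<bar>))}"

end

theory Submission
  imports Defs
begin



definition gnorm :: "'a measure \<Rightarrow> ('a \<Rightarrow> real) \<Rightarrow> real \<Rightarrow> bool" where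
  "gnorm M X s \<longleftrightarrow> (s > 0 \<and> distributed M lborel X (normal_density 0 s))
     \<or> (s = 0 \<and> X \<in> borel_measurable M \<and> (\<forall>x\<in>space M. X x = 0))"

lemma gnorm_meas: "gnorm M X s \<Longrightarrow> X \<in> borel_measurable M"
  unfolding gnorm_def using distributed_measurable by (metis measurable_lborel1)

lemma (in prob_space) gnorm_scale:
  assumes "gnorm M X s" shows "gnorm M (\<lambda>x. c * X x) (\<bar>c\<bar> * s)"
proof (cases "c = 0")
  case True then show ?thesis using gnorm_meas[OF assms] by (simp add: gnorm_def)
next
  case c: False
  show ?thesis
  proof (cases "s = 0")
    case True then show ?thesis using assms gnorm_meas[OF assms] by (simp add: gnorm_def)
  next
    case False
    then have s: "s > 0" "distributed M lborel X (normal_density 0 s)" using assms by (auto simp: gnorm_def)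
    have "distributed M lborel (\<lambda>x. 0 + c * X x) (normal_density (0 + c * 0) (\<bar>c\<bar> * s))"
      by (rule normal_density_affine[OF s(2) s(1) c])
    then show ?thesis using s c by (simp add: gnorm_def)
  qed
qed

lemma distributed_cong_fun:
  assumes "distributed M N X f" "\<And>x. x \<in> space M \<Longrightarrow> X x = Y x"
  shows "distributed M N Y f"
proof -
  have "distr M N X = distr M N Y" by (rule distr_cong) (auto simp: assms)
  moreover have "Y \<in> measurable M N" using distributed_measurable[OF assms(1)] assms(2)
    using measurable_cong by blast
  ultimately show ?thesis using assms(1) by (auto simp: distributed_def)
qed

lemma (in prob_space) gnorm_add:
  assumes ind: "indep_var borel X borel Y" and X: "gnorm M X s" and Y: "gnorm M Y t"
  shows "gnorm M (\<lambda>x. X x + Y x) (sqrt (s\<^sup>2 + t\<^sup>2))"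
proof -
  have s0: "s \<ge> 0" "t \<ge> 0" using X Y by (auto simp: gnorm_def)
  have mX: "X \<in> borel_measurable M" and mY: "Y \<in> borel_measurable M" using X Y gnorm_meas by auto
  show ?thesis
  proof (cases "s = 0")
    case True
    then have X0: "\<And>x. x \<in> space M \<Longrightarrow> X x = 0" using X by (auto simp: gnorm_def)
    show ?thesis
    proof (cases "t = 0")
      case True then show ?thesis using X0 Y \<open>s = 0\<close> mX mY by (auto simp: gnorm_def)
    next
      case False
      then have "t > 0" "distributed M lborel Y (normal_density 0 t)" using Y by (auto simp: gnorm_def)
      moreover have "distributed M lborel (\<lambda>x. X x + Y x) (normal_density 0 t)"
        by (rule distributed_cong_fun[OF \<open>distributed M lborel Y _\<close>]) (simp add: X0)
      ultimately show ?thesis using \<open>s = 0\<close> s0 by (simp add: gnorm_def)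
    qed
  next
    case False
    then have sp: "s > 0" "distributed M lborel X (normal_density 0 s)" using X s0 by (auto simp: gnorm_def)
    show ?thesis
    proof (cases "t = 0")
      case True
      then have Y0: "\<And>x. x \<in> space M \<Longrightarrow> Y x = 0" using Y by (auto simp: gnorm_def)
      have "distributed M lborel (\<lambda>x. X x + Y x) (normal_density 0 s)"
        by (rule distributed_cong_fun[OF sp(2)]) (simp add: Y0)
      then show ?thesis using True sp s0 by (simp add: gnorm_def)
    next
      case False
      then have tp: "t > 0" "distributed M lborel Y (normal_density 0 t)" using Y s0 by (auto simp: gnorm_def)
      have "distributed M lborel (\<lambda>x. X x + Y x) (normal_density (0 + 0) (sqrt (s\<^sup>2 + t\<^sup>2)))"
        by (rule add_indep_normal[OF ind sp(1) tp(1) sp(2) tp(2)])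
      then show ?thesis using sp tp by (simp add: gnorm_def add_pos_pos)
    qed
  qed
qed

lemma (in prob_space) gnorm_sum:
  assumes "finite I" "indep_vars (\<lambda>_. borel) X I" "\<And>i. i \<in> I \<Longrightarrow> gnorm M (X i) (s i)"
  shows "gnorm M (\<lambda>x. \<Sum>i\<in>I. X i x) (sqrt (\<Sum>i\<in>I. (s i)\<^sup>2))"
  using assms
proof (induction I rule: finite_induct)
  case empty then show ?case by (simp add: gnorm_def)
next
  case (insert i I)
  have ind: "indep_var borel (X i) borel (\<lambda>\<omega>. \<Sum>i\<in>I. X i \<omega>)"
    by (rule indep_vars_sum[OF insert(1,2,4)])
  have IH: "gnorm M (\<lambda>x. \<Sum>i\<in>I. X i x) (sqrt (\<Sum>i\<in>I. (s i)\<^sup>2))"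
    using insert by (auto intro: indep_vars_subset)
  have "gnorm M (\<lambda>x. X i x + (\<Sum>i\<in>I. X i x)) (sqrt ((s i)\<^sup>2 + (sqrt (\<Sum>i\<in>I. (s i)\<^sup>2))\<^sup>2))"
    by (rule gnorm_add[OF ind _ IH]) (simp add: insert)
  then show ?case using insert by (simp add: sum_nonneg)
qed




lemma prob_space_nd: "s > 0 \<Longrightarrow> prob_space (density lborel (normal_density 0 s))"
  by (rule prob_space_normal_density) auto

lemma PiM_coords:
  fixes s :: real and I :: "'i set"
  assumes fin: "finite I" and sp: "s > 0"
  shows "prob_space.indep_vars (PiM I (\<lambda>i. density lborel (normal_density 0 s))) (\<lambda>_. borel) (\<lambda>i x. x i) I"
    and "\<And>i. i \<in> I \<Longrightarrow> distributed (PiM I (\<lambda>i. density lborel (normal_density 0 s))) lborel (\<lambda>x. x i) (normal_density 0 s)"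
proof -
  let ?N = "density lborel (normal_density 0 s)"
  interpret N: prob_space ?N using sp by (rule prob_space_nd)
  interpret product_prob_space "\<lambda>_. ?N" I
    by unfold_locales
  have comp: "distr (PiM I (\<lambda>_. ?N)) ?N (\<lambda>x. x i) = ?N" if "i \<in> I" for i
    by (rule distr_PiM_component) (auto simp: that N.prob_space_axioms)
  have comp2: "distr (PiM I (\<lambda>_. ?N)) borel (\<lambda>x. x i) = ?N" if "i \<in> I" for i
  proof -
    have "distr (PiM I (\<lambda>_. ?N)) borel (\<lambda>x. x i) = distr (PiM I (\<lambda>_. ?N)) ?N (\<lambda>x. x i)"
      by (rule distr_cong) auto
    then show ?thesis using comp[OF that] by simp
  qed
  show "\<And>i. i \<in> I \<Longrightarrow> distributed (PiM I (\<lambda>i. ?N)) lborel (\<lambda>x. x i) (normal_density 0 s)"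
  proof -
    fix i assume i: "i \<in> I"
    have "distr (PiM I (\<lambda>_. ?N)) lborel (\<lambda>x. x i) = distr (PiM I (\<lambda>_. ?N)) ?N (\<lambda>x. x i)"
      by (rule distr_cong) auto
    then show "distributed (PiM I (\<lambda>i. ?N)) lborel (\<lambda>x. x i) (normal_density 0 s)"
      unfolding distributed_def using comp[OF i] i by auto
  qed
  show "prob_space.indep_vars (PiM I (\<lambda>i. ?N)) (\<lambda>_. borel) (\<lambda>i x. x i) I"
  proof (cases "I = {}")
    case True then show ?thesis unfolding P.indep_vars_def2 P.indep_sets_def by simp
  next
    case False
    show ?thesis
    proof (subst indep_vars_iff_distr_eq_PiM'[OF False])
      show "\<And>i. i \<in> I \<Longrightarrow> random_variable borel (\<lambda>x. x i)" by auto
      have "distr (Pi\<^sub>M I (\<lambda>_. ?N)) (Pi\<^sub>M I (\<lambda>i. borel)) (\<lambda>x. \<lambda>i\<in>I. x i)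
          = distr (Pi\<^sub>M I (\<lambda>_. ?N)) (Pi\<^sub>M I (\<lambda>_. ?N)) (\<lambda>x. x)"
        by (rule distr_cong) (auto simp: space_PiM restrict_def PiE_def extensional_def intro!: sets_PiM_cong)
      also have "\<dots> = Pi\<^sub>M I (\<lambda>_. ?N)" by simp
      also have "\<dots> = Pi\<^sub>M I (\<lambda>i. distr (Pi\<^sub>M I (\<lambda>_. ?N)) borel (\<lambda>x. x i))"
        by (rule PiM_cong) (auto simp: comp2)
      finally show "distr (Pi\<^sub>M I (\<lambda>_. ?N)) (Pi\<^sub>M I (\<lambda>i. borel)) (\<lambda>x. \<lambda>i\<in>I. x i) =
          Pi\<^sub>M I (\<lambda>i. distr (Pi\<^sub>M I (\<lambda>_. ?N)) borel (\<lambda>x. x i))" .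
    qed
  qed
qed




lemma distr_pair_snd':
  assumes "prob_space M1" "prob_space M2"
  shows "distr (M1 \<Otimes>\<^sub>M M2) M2 snd = M2"
proof -
  interpret M1: prob_space M1 by fact
  interpret M2: prob_space M2 by fact
  interpret pair_sigma_finite M1 M2 ..
  show ?thesis
  proof (intro measure_eqI)
    fix A assume A: "A \<in> sets (distr (M1 \<Otimes>\<^sub>M M2) M2 snd)"
    from A have "emeasure (distr (M1 \<Otimes>\<^sub>M M2) M2 snd) A = emeasure (M1 \<Otimes>\<^sub>M M2) (space M1 \<times> A)"
      by (auto simp add: emeasure_distr space_pair_measure dest: sets.sets_into_space intro!: arg_cong2[where f=emeasure])
    with A show "emeasure (distr (M1 \<Otimes>\<^sub>M M2) M2 snd) A = emeasure M2 A"
      by (simp add: M2.emeasure_pair_measure_Times M1.emeasure_space_1)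
  qed simp
qed

lemma distr_pair_fst':
  assumes "prob_space M1" "prob_space M2"
  shows "distr (M1 \<Otimes>\<^sub>M M2) M1 fst = M1"
  using assms(2) by (rule prob_space.distr_pair_fst)

lemma indep_fst_snd_comp:
  fixes f :: "'a \<Rightarrow> real" and g :: "'b \<Rightarrow> real"
  assumes "prob_space M1" "prob_space M2" "f \<in> borel_measurable M1" "g \<in> borel_measurable M2"
  shows "prob_space.indep_var (M1 \<Otimes>\<^sub>M M2) borel (\<lambda>\<omega>. f (fst \<omega>)) borel (\<lambda>\<omega>. g (snd \<omega>))"
proof -
  interpret M1: prob_space M1 by fact
  interpret M2: prob_space M2 by fact
  interpret pair_prob_space M1 M2 ..
  have d1: "distr (M1 \<Otimes>\<^sub>M M2) borel (\<lambda>\<omega>. f (fst \<omega>)) = distr M1 borel f"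
  proof -
    have "distr (M1 \<Otimes>\<^sub>M M2) borel (\<lambda>\<omega>. f (fst \<omega>)) = distr (M1 \<Otimes>\<^sub>M M2) borel (f \<circ> fst)"
      by (simp add: comp_def)
    also have "\<dots> = distr (distr (M1 \<Otimes>\<^sub>M M2) M1 fst) borel f"
      by (rule distr_distr[symmetric]) (auto simp: assms)
    finally show ?thesis using distr_pair_fst'[OF assms(1,2)] by simp
  qed
  have d2: "distr (M1 \<Otimes>\<^sub>M M2) borel (\<lambda>\<omega>. g (snd \<omega>)) = distr M2 borel g"
  proof -
    have "distr (M1 \<Otimes>\<^sub>M M2) borel (\<lambda>\<omega>. g (snd \<omega>)) = distr (M1 \<Otimes>\<^sub>M M2) borel (g \<circ> snd)"
      by (simp add: comp_def)
    also have "\<dots> = distr (distr (M1 \<Otimes>\<^sub>M M2) M2 snd) borel g"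
      by (rule distr_distr[symmetric]) (auto simp: assms)
    finally show ?thesis using distr_pair_snd'[OF assms(1,2)] by simp
  qed
  have sf: "sigma_finite_measure (distr M2 borel g)"
    using M2.prob_space_distr[OF assms(4)] prob_space_imp_sigma_finite by blast
  have "distr M1 borel f \<Otimes>\<^sub>M distr M2 borel g = distr (M1 \<Otimes>\<^sub>M M2) (borel \<Otimes>\<^sub>M borel) (\<lambda>(x, y). (f x, g y))"
    by (rule pair_measure_distr[OF assms(3,4) sf])
  also have "(\<lambda>(x, y). (f x, g y)) = (\<lambda>\<omega>. (f (fst \<omega>), g (snd \<omega>)))" by auto
  finally have eq: "distr M1 borel f \<Otimes>\<^sub>M distr M2 borel g = distr (M1 \<Otimes>\<^sub>M M2) (borel \<Otimes>\<^sub>M borel) (\<lambda>\<omega>. (f (fst \<omega>), g (snd \<omega>)))" .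
  have r1: "(\<lambda>\<omega>. f (fst \<omega>)) \<in> borel_measurable (M1 \<Otimes>\<^sub>M M2)" using assms(3) by measurable
  have r2: "(\<lambda>\<omega>. g (snd \<omega>)) \<in> borel_measurable (M1 \<Otimes>\<^sub>M M2)" using assms(4) by measurable
  show ?thesis
    by (subst P.indep_var_distribution_eq) (simp add: d1 d2 eq r1 r2)
qed

lemma gnorm_lift_snd:
  assumes "prob_space M1" "prob_space M2" "gnorm M2 f s"
  shows "gnorm (M1 \<Otimes>\<^sub>M M2) (\<lambda>\<omega>. f (snd \<omega>)) s"
proof -
  have mf: "f \<in> borel_measurable M2" using gnorm_meas[OF assms(3)] .
  show ?thesis
  proof (cases "s = 0")
    case True then show ?thesis using assms(3) mf by (auto simp: gnorm_def space_pair_measure)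
  next
    case False
    then have s: "s > 0" "distributed M2 lborel f (normal_density 0 s)" using assms(3) by (auto simp: gnorm_def)
    have mf': "f \<in> measurable M2 lborel" using distributed_measurable[OF s(2)] .
    have "distr (M1 \<Otimes>\<^sub>M M2) lborel (\<lambda>\<omega>. f (snd \<omega>)) = distr (M1 \<Otimes>\<^sub>M M2) lborel (f \<circ> snd)"
      by (simp add: comp_def)
    also have "\<dots> = distr (distr (M1 \<Otimes>\<^sub>M M2) M2 snd) lborel f"
      by (rule distr_distr[symmetric]) (auto simp: mf' mf)
    also have "\<dots> = distr M2 lborel f" using distr_pair_snd'[OF assms(1,2)] by simp
    finally have "distributed (M1 \<Otimes>\<^sub>M M2) lborel (\<lambda>\<omega>. f (snd \<omega>)) (normal_density 0 s)"
      using s(2) mf' mf unfolding distributed_def by auto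
    then show ?thesis using s by (simp add: gnorm_def)
  qed
qed

lemma gnorm_lift_fst:
  assumes "prob_space M1" "prob_space M2" "gnorm M1 f s"
  shows "gnorm (M1 \<Otimes>\<^sub>M M2) (\<lambda>\<omega>. f (fst \<omega>)) s"
proof -
  have mf: "f \<in> borel_measurable M1" using gnorm_meas[OF assms(3)] .
  show ?thesis
  proof (cases "s = 0")
    case True then show ?thesis using assms(3) mf by (auto simp: gnorm_def space_pair_measure)
  next
    case False
    then have s: "s > 0" "distributed M1 lborel f (normal_density 0 s)" using assms(3) by (auto simp: gnorm_def)
    have mf': "f \<in> measurable M1 lborel" using distributed_measurable[OF s(2)] .
    have "distr (M1 \<Otimes>\<^sub>M M2) lborel (\<lambda>\<omega>. f (fst \<omega>)) = distr (M1 \<Otimes>\<^sub>M M2) lborel (f \<circ> fst)"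
      by (simp add: comp_def)
    also have "\<dots> = distr (distr (M1 \<Otimes>\<^sub>M M2) M1 fst) lborel f"
      by (rule distr_distr[symmetric]) (auto simp: mf' mf)
    also have "\<dots> = distr M1 lborel f" using distr_pair_fst'[OF assms(1,2)] by simp
    finally have "distributed (M1 \<Otimes>\<^sub>M M2) lborel (\<lambda>\<omega>. f (fst \<omega>)) (normal_density 0 s)"
      using s(2) mf' mf unfolding distributed_def by auto
    then show ?thesis using s by (simp add: gnorm_def)
  qed
qed

lemma gnorm_pair_add:
  assumes "prob_space M1" "prob_space M2" "gnorm M1 f s" "gnorm M2 g t"
  shows "gnorm (M1 \<Otimes>\<^sub>M M2) (\<lambda>\<omega>. f (fst \<omega>) + g (snd \<omega>)) (sqrt (s\<^sup>2 + t\<^sup>2))"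
proof -
  interpret M1: prob_space M1 by fact
  interpret M2: prob_space M2 by fact
  interpret pair_prob_space M1 M2 ..
  have ind: "P.indep_var borel (\<lambda>\<omega>. f (fst \<omega>)) borel (\<lambda>\<omega>. g (snd \<omega>))"
    by (rule indep_fst_snd_comp[OF assms(1,2) gnorm_meas[OF assms(3)] gnorm_meas[OF assms(4)]])
  show ?thesis
    by (rule P.gnorm_add[OF ind gnorm_lift_fst[OF assms(1,2,3)] gnorm_lift_snd[OF assms(1,2,4)]])
qed

lemma gnorm_lincomb_PiM:
  fixes c :: "'i \<Rightarrow> real"
  assumes fin: "finite I" and sp: "s > 0"
  shows "gnorm (PiM I (\<lambda>i. density lborel (normal_density 0 s))) (\<lambda>x. \<Sum>i\<in>I. c i * x i)
           (sqrt (\<Sum>i\<in>I. (c i)\<^sup>2 * s\<^sup>2))"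
proof -
  let ?N = "density lborel (normal_density 0 s)"
  interpret N: prob_space ?N using sp by (rule prob_space_nd)
  interpret product_prob_space "\<lambda>_. ?N" I by unfold_locales
  have ind: "P.indep_vars (\<lambda>_. borel) (\<lambda>i x. c i * x i) I"
    using P.indep_vars_compose2[OF PiM_coords(1)[OF fin sp], of "\<lambda>i y. c i * y" "\<lambda>_. borel"] by auto
  have g: "gnorm (PiM I (\<lambda>_. ?N)) (\<lambda>x. c i * x i) (\<bar>c i\<bar> * s)" if "i \<in> I" for i
    using P.gnorm_scale[of "\<lambda>x. x i" s "c i"] PiM_coords(2)[OF fin sp that] sp by (simp add: gnorm_def)
  have "gnorm (PiM I (\<lambda>_. ?N)) (\<lambda>x. \<Sum>i\<in>I. c i * x i) (sqrt (\<Sum>i\<in>I. (\<bar>c i\<bar> * s)\<^sup>2))"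
    by (rule P.gnorm_sum[OF fin ind g])
  then show ?thesis by (simp add: power_mult_distrib)
qed




lemma Qfun_nn: "(\<integral>\<^sup>+x. ennreal (std_normal_density x) * indicator {c<..} x \<partial>lborel) = ennreal (Qfun c)"
proof -
  have int: "integrable lborel (\<lambda>x. indicator {c<..} x * std_normal_density x)"
    using integrable_mult_indicator[of "{c<..}" lborel std_normal_density] by simp
  have "(\<integral>\<^sup>+x. ennreal (std_normal_density x) * indicator {c<..} x \<partial>lborel)
       = (\<integral>\<^sup>+x. ennreal (indicator {c<..} x * std_normal_density x) \<partial>lborel)"
    by (intro nn_integral_cong) (auto simp: indicator_def)
  also have "\<dots> = ennreal (\<integral>x. indicator {c<..} x * std_normal_density x \<partial>lborel)"
    by (rule nn_integral_eq_integral[OF int]) auto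
  also have "(\<integral>x. indicator {c<..} x * std_normal_density x \<partial>lborel) = Qfun c"
    unfolding Qfun_def set_lebesgue_integral_def by simp
  finally show ?thesis .
qed

lemma (in prob_space) std_gt:
  assumes Y: "distributed M lborel Y std_normal_density"
  shows "prob {x\<in>space M. c < Y x} = Qfun c"
proof -
  have "emeasure M (Y -` {c<..} \<inter> space M) = (\<integral>\<^sup>+x. ennreal (std_normal_density x) * indicator {c<..} x \<partial>lborel)"
    by (rule distributed_emeasure[OF Y]) auto
  also have "\<dots> = ennreal (Qfun c)" by (rule Qfun_nn)
  finally have "emeasure M {x\<in>space M. c < Y x} = ennreal (Qfun c)"
    by (simp add: vimage_def Int_def conj_commute)
  moreover have "Qfun c \<ge> 0" unfolding Qfun_def set_lebesgue_integral_def
    by (intro integral_nonneg_AE) (auto simp: indicator_def)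
  ultimately show ?thesis by (simp add: emeasure_eq_measure)
qed

lemma (in prob_space) std_ge:
  assumes Y: "distributed M lborel Y std_normal_density"
  shows "prob {x\<in>space M. c \<le> Y x} = Qfun c"
proof -
  have "emeasure M (Y -` {c..} \<inter> space M) = (\<integral>\<^sup>+x. ennreal (std_normal_density x) * indicator {c..} x \<partial>lborel)"
    by (rule distributed_emeasure[OF Y]) auto
  also have "\<dots> = (\<integral>\<^sup>+x. ennreal (std_normal_density x) * indicator {c<..} x \<partial>lborel)"
    by (rule nn_integral_cong_AE) (use AE_lborel_singleton[of c] in \<open>auto simp: indicator_def elim!: eventually_mono\<close>)
  also have "\<dots> = ennreal (Qfun c)" by (rule Qfun_nn)
  finally have "emeasure M {x\<in>space M. c \<le> Y x} = ennreal (Qfun c)"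
    by (simp add: vimage_def Int_def conj_commute)
  moreover have "Qfun c \<ge> 0" unfolding Qfun_def set_lebesgue_integral_def
    by (intro integral_nonneg_AE) (auto simp: indicator_def)
  ultimately show ?thesis by (simp add: emeasure_eq_measure)
qed

lemma (in prob_space) gnorm_tails:
  assumes X: "gnorm M X s" and s: "s > 0" and a: "a > 0"
  shows "prob {x\<in>space M. X x \<notin> {-a..<a}} = 2 * Qfun (a / s)"
    and "prob {x\<in>space M. a \<le> \<bar>X x\<bar>} = 2 * Qfun (a / s)"
proof -
  have D: "distributed M lborel X (normal_density 0 s)" using X s by (auto simp: gnorm_def)
  have Y: "distributed M lborel (\<lambda>x. (X x - 0) / s) std_normal_density"
    using normal_standard_normal_convert[OF s] D by simp
  have "distributed M lborel (\<lambda>x. 0 + (-1) * ((X x - 0) / s)) (normal_density (0 + (-1) * 0) (\<bar>-1\<bar> * 1))"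
    by (rule normal_density_affine[OF Y]) auto
  then have W: "distributed M lborel (\<lambda>x. - X x / s) std_normal_density" by simp
  have mX: "X \<in> borel_measurable M" using gnorm_meas[OF X] .
  have p1: "prob {x\<in>space M. a / s \<le> X x / s} = Qfun (a/s)" using std_ge[OF Y] by simp
  have p2: "prob {x\<in>space M. a / s < - X x / s} = Qfun (a/s)" using std_gt[OF W] by simp
  have p3: "prob {x\<in>space M. a / s \<le> - X x / s} = Qfun (a/s)" using std_ge[OF W] by simp
  have e1: "{x\<in>space M. a / s \<le> X x / s} = {x\<in>space M. a \<le> X x}"
    using s by (auto simp: divide_le_cancel)
  have e2: "{x\<in>space M. a / s < - X x / s} = {x\<in>space M. X x < - a}"
    using s by (auto simp: field_simps)
  have e3: "{x\<in>space M. a / s \<le> - X x / s} = {x\<in>space M. X x \<le> - a}"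
    using s by (auto simp: field_simps)
  have "{x\<in>space M. X x \<notin> {-a..<a}} = {x\<in>space M. X x < - a} \<union> {x\<in>space M. a \<le> X x}"
    by auto
  moreover have "prob ({x\<in>space M. X x < - a} \<union> {x\<in>space M. a \<le> X x})
     = prob {x\<in>space M. X x < - a} + prob {x\<in>space M. a \<le> X x}"
    by (rule finite_measure_Union) (use a mX in auto)
  ultimately show "prob {x\<in>space M. X x \<notin> {-a..<a}} = 2 * Qfun (a / s)"
    using p1 p2 e1 e2 by simp
  have "{x\<in>space M. a \<le> \<bar>X x\<bar>} = {x\<in>space M. X x \<le> - a} \<union> {x\<in>space M. a \<le> X x}"
    by auto
  moreover have "prob ({x\<in>space M. X x \<le> - a} \<union> {x\<in>space M. a \<le> X x})
     = prob {x\<in>space M. X x \<le> - a} + prob {x\<in>space M. a \<le> X x}"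
    by (rule finite_measure_Union) (use a mX in auto)
  ultimately show "prob {x\<in>space M. a \<le> \<bar>X x\<bar>} = 2 * Qfun (a / s)"
    using p1 p3 e1 e3 by simp
qed




context fixes P \<sigma> Pt \<sigma>t L :: real
begin

definition fa :: "nat \<Rightarrow> real" where
  "fa m = 1 - betaN P \<sigma> Pt \<sigma>t L (Suc m) * alpha P Pt L * gam P \<sigma> Pt \<sigma>t L (Suc m)"

primrec cz :: "nat \<Rightarrow> nat \<Rightarrow> real" where
  "cz 0 i = (if i = 1 then 1 / sqrt P else 0)"
| "cz (Suc m) i = fa m * cz m i - (if i = m + 2 then betaN P \<sigma> Pt \<sigma>t L (Suc m) else 0)"

primrec czt :: "nat \<Rightarrow> nat \<Rightarrow> real" where
  "czt 0 j = 0"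
| "czt (Suc m) j = fa m * czt m j - (if j = Suc m then betaN P \<sigma> Pt \<sigma>t L (Suc m) * alpha P Pt L else 0)"

lemma cz_supp: "i > m + 1 \<Longrightarrow> cz m i = 0"
  by (induction m arbitrary: i) auto

lemma czt_supp: "j > m \<Longrightarrow> czt m j = 0"
  by (induction m arbitrary: j) auto

end

lemma sum_delta_lin:
  fixes c z :: "nat \<Rightarrow> real"
  assumes "finite I" "k \<in> I"
  shows "(\<Sum>i\<in>I. (a * c i - (if i = k then b else 0)) * z i) = a * (\<Sum>i\<in>I. c i * z i) - b * z k"
proof -
  have pw: "\<And>i. (a * c i - (if i = k then b else 0)) * z i = a * (c i * z i) - (if i = k then b * z i else 0)"
    by (auto simp: algebra_simps)
  have "(\<Sum>i\<in>I. (a * c i - (if i = k then b else 0)) * z i)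
      = (\<Sum>i\<in>I. a * (c i * z i)) - (\<Sum>i\<in>I. (if i = k then b * z i else 0))"
    unfolding pw by (rule sum_subtractf)
  also have "\<dots> = a * (\<Sum>i\<in>I. c i * z i) - b * z k"
    using assms by (simp add: sum_distrib_left)
  finally show ?thesis .
qed

lemma sum_delta_sq:
  fixes c :: "nat \<Rightarrow> real"
  assumes "finite I" "k \<in> I" "c k = 0"
  shows "(\<Sum>i\<in>I. (a * c i - (if i = k then b else 0))\<^sup>2 * w) = a\<^sup>2 * (\<Sum>i\<in>I. (c i)\<^sup>2 * w) + b\<^sup>2 * w"
proof -
  have "(\<Sum>i\<in>I. (a * c i - (if i = k then b else 0))\<^sup>2 * w)
      = (a * c k - b)\<^sup>2 * w + (\<Sum>i\<in>I - {k}. (a * c i - (if i = k then b else 0))\<^sup>2 * w)"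
    using assms by (simp add: sum.remove)
  also have "(\<Sum>i\<in>I - {k}. (a * c i - (if i = k then b else 0))\<^sup>2 * w) = (\<Sum>i\<in>I - {k}. a\<^sup>2 * ((c i)\<^sup>2 * w))"
    by (rule sum.cong) (auto simp: power_mult_distrib)
  also have "(\<Sum>i\<in>I. (c i)\<^sup>2 * w) = (\<Sum>i\<in>I - {k}. (c i)\<^sup>2 * w)"
    using assms by (simp add: sum.remove)
  ultimately show ?thesis using assms by (simp add: sum_distrib_left power2_eq_square)
qed

lemma est_lin:
  assumes "P > 0" "m < N"
  shows "est id P \<sigma> Pt \<sigma>t L \<theta> v z zt m - \<theta>
     = (\<Sum>i\<in>{1..N}. cz P \<sigma> Pt \<sigma>t L m i * z i) + (\<Sum>j\<in>{1..<N}. czt P \<sigma> Pt \<sigma>t L m j * zt j)"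
  using assms(2)
proof (induction m)
  case 0
  have "(\<Sum>i\<in>{1..N}. cz P \<sigma> Pt \<sigma>t L 0 i * z i) = (\<Sum>i\<in>{1..N}. if i = 1 then z i / sqrt P else 0)"
    by (rule sum.cong) auto
  also have "\<dots> = z 1 / sqrt P" using 0 by simp
  finally show ?case using assms(1) by (simp add: field_simps)
next
  case (Suc m)
  let ?b = "betaN P \<sigma> Pt \<sigma>t L (Suc m)" and ?a = "alpha P Pt L" and ?g = "gam P \<sigma> Pt \<sigma>t L (Suc m)"
  let ?e = "est id P \<sigma> Pt \<sigma>t L \<theta> v z zt m - \<theta>"
  have IH: "?e = (\<Sum>i\<in>{1..N}. cz P \<sigma> Pt \<sigma>t L m i * z i) + (\<Sum>j\<in>{1..<N}. czt P \<sigma> Pt \<sigma>t L m j * zt j)"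
    by (rule Suc.IH) (use Suc.prems in simp)
  have s1: "(\<Sum>i\<in>{1..N}. cz P \<sigma> Pt \<sigma>t L (Suc m) i * z i) = fa P \<sigma> Pt \<sigma>t L m * (\<Sum>i\<in>{1..N}. cz P \<sigma> Pt \<sigma>t L m i * z i) - ?b * z (m + 2)"
    unfolding cz.simps by (rule sum_delta_lin[where c="cz P \<sigma> Pt \<sigma>t L m" and a="fa P \<sigma> Pt \<sigma>t L m" and k="m+2" and b="?b"]) (use Suc.prems in auto)
  have s2: "(\<Sum>j\<in>{1..<N}. czt P \<sigma> Pt \<sigma>t L (Suc m) j * zt j) = fa P \<sigma> Pt \<sigma>t L m * (\<Sum>j\<in>{1..<N}. czt P \<sigma> Pt \<sigma>t L m j * zt j) - ?b * ?a * zt (Suc m)"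
    unfolding czt.simps by (rule sum_delta_lin[where c="czt P \<sigma> Pt \<sigma>t L m" and a="fa P \<sigma> Pt \<sigma>t L m" and k="Suc m" and b="?b * ?a"]) (use Suc.prems in auto)
  have "est id P \<sigma> Pt \<sigma>t L \<theta> v z zt (Suc m) - \<theta> = fa P \<sigma> Pt \<sigma>t L m * ?e - ?b * z (m + 2) - ?b * ?a * zt (Suc m)"
    by (simp add: Let_def fa_def algebra_simps)
  also have "\<dots> = (\<Sum>i\<in>{1..N}. cz P \<sigma> Pt \<sigma>t L (Suc m) i * z i) + (\<Sum>j\<in>{1..<N}. czt P \<sigma> Pt \<sigma>t L (Suc m) j * zt j)"
    by (simp only: IH s1 s2) (simp add: algebra_simps)
  finally show ?case .
qed




lemma alg_core:
  fixes r u :: real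
  assumes "r > 0" "0 < u" "u < 1"
  shows "(1 - r*(1-u)/(1+r))\<^sup>2 + r*(1-u)/(1+r)\<^sup>2 + r*(1-u)/(1+r)\<^sup>2 * (u*r) = 1/(1 + r*(1-u)/(1+u*r))"
proof -
  have h1: "1 + r > 0" "1 + u*r > 0" using assms by (auto intro: add_pos_pos)
  have h2: "1 + u*r + r*(1-u) = 1 + r" by (simp add: algebra_simps)
  have l: "(1 - r*(1-u)/(1+r)) = (1 + u*r)/(1+r)" using h1 by (simp add: field_simps)
  have rhs: "1/(1 + r*(1-u)/(1+u*r)) = (1+u*r)/(1+r)" using h1 h2 by (simp add: field_simps)
  have "(1 + u*r)\<^sup>2/(1+r)\<^sup>2 + r*(1-u)/(1+r)\<^sup>2 + r*(1-u)/(1+r)\<^sup>2 * (u*r) = ((1 + u*r)\<^sup>2 + r*(1-u) * (1 + u*r))/(1+r)\<^sup>2"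
    by (simp add: add_divide_distrib[symmetric] diff_divide_distrib[symmetric] times_divide_eq_left) (simp add: algebra_simps)
  also have "(1 + u*r)\<^sup>2 + r*(1-u) * (1 + u*r) = (1+u*r)*(1+r)" by (simp add: algebra_simps power2_eq_square)
  also have "(1+u*r)*(1+r) / (1+r)\<^sup>2 = (1+u*r)/(1+r)" using h1 by (simp add: power2_eq_square)
  finally show ?thesis by (simp add: l rhs power_divide)
qed

locale prm =
  fixes P \<sigma> Pt \<sigma>t L :: real
  assumes P: "P > 0" and s: "\<sigma> > 0" and Pt: "Pt > 0" and st: "\<sigma>t > 0" and L: "L > 0"
    and Ls: "L < snr Pt \<sigma>t"
begin

definition "r = snr P \<sigma>"
definition "u = L / snr Pt \<sigma>t"

lemma r_pos: "r > 0" using P s by (simp add: r_def snr_def)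
lemma u_pos: "u > 0" "u < 1"
proof -
  have "L * \<sigma>t\<^sup>2 < Pt" using Ls st by (simp add: snr_def less_divide_eq)
  then show "u > 0" "u < 1" using L Pt st by (auto simp: u_def snr_def field_simps)
qed

lemma Delta_eq: "L / Delta P \<sigma> Pt \<sigma>t = u * r"
  using P s Pt st by (simp add: Delta_def u_def r_def snr_def field_simps)

lemma G_eq: "gfac P \<sigma> Pt \<sigma>t L = 1 + r*(1-u)/(1+u*r)"
  unfolding gfac_def by (simp add: Delta_eq r_def u_def mult.commute)

lemma G_pos: "gfac P \<sigma> Pt \<sigma>t L > 1"
proof -
  have "r*(1-u)/(1+u*r) > 0" using r_pos u_pos by (auto intro!: divide_pos_pos add_pos_pos)
  then show ?thesis by (simp add: G_eq)
qed

lemma sig_pos: "sig P \<sigma> Pt \<sigma>t L n > 0"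
  unfolding sig_def using r_pos G_pos by (simp add: r_def[symmetric])

lemma sig_sq: "(sig P \<sigma> Pt \<sigma>t L n)\<^sup>2 = inverse r * gfac P \<sigma> Pt \<sigma>t L powr (1 - real n)"
proof -
  have "gfac P \<sigma> Pt \<sigma>t L > 0" using G_pos by simp
  then show ?thesis unfolding sig_def using r_pos by (simp add: r_def[symmetric])
qed

lemma sig_sq_Suc: "(sig P \<sigma> Pt \<sigma>t L (Suc n))\<^sup>2 = (sig P \<sigma> Pt \<sigma>t L n)\<^sup>2 / gfac P \<sigma> Pt \<sigma>t L"
proof -
  have "gfac P \<sigma> Pt \<sigma>t L powr (1 - real (Suc n)) = gfac P \<sigma> Pt \<sigma>t L powr (1 - real n) / gfac P \<sigma> Pt \<sigma>t L"
  proof -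
    have "gfac P \<sigma> Pt \<sigma>t L powr (1 - real (Suc n)) = gfac P \<sigma> Pt \<sigma>t L powr ((1 - real n) - 1)"
      by (simp add: algebra_simps)
    also have "\<dots> = gfac P \<sigma> Pt \<sigma>t L powr (1 - real n) / gfac P \<sigma> Pt \<sigma>t L"
      using G_pos by (simp add: powr_diff powr_minus_divide)
    finally show ?thesis .
  qed
  then show ?thesis by (simp add: sig_sq)
qed

lemma sig1: "(sig P \<sigma> Pt \<sigma>t L 1)\<^sup>2 = \<sigma>\<^sup>2 / P"
proof -
  have "gfac P \<sigma> Pt \<sigma>t L \<noteq> 0" using G_pos by simp
  then show ?thesis using P s by (simp add: sig_sq r_def snr_def)
qed

lemma bag: "betaN P \<sigma> Pt \<sigma>t L n * alpha P Pt L * gam P \<sigma> Pt \<sigma>t L n = r*(1-u)/(1+r)"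
proof -
  define sg where "sg = sig P \<sigma> Pt \<sigma>t L n"
  have sg: "sg > 0" using sig_pos sg_def by simp
  have e1: "L*P/Pt * (Pt/L - \<sigma>t\<^sup>2) = P*(1-u)"
    unfolding u_def snr_def using L Pt st by (simp add: field_simps)
  have e2: "sqrt (L*P/Pt) * sqrt (Pt/L - \<sigma>t\<^sup>2) = sqrt (P*(1-u))"
    by (simp only: real_sqrt_mult[symmetric] e1)
  have e3: "sqrt (r*(1-u)) * sqrt (P*(1-u)) = (1-u) * (P/\<sigma>)"
  proof -
    have "r*(1-u) * (P*(1-u)) = ((1-u) * (P/\<sigma>))\<^sup>2" using s by (simp add: r_def snr_def power2_eq_square field_simps)
    moreover have "(1-u) * (P/\<sigma>) \<ge> 0" using u_pos P s by simp
    ultimately show ?thesis by (simp only: real_sqrt_mult[symmetric] real_sqrt_abs abs_of_nonneg)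
  qed
  have "betaN P \<sigma> Pt \<sigma>t L n * alpha P Pt L * gam P \<sigma> Pt \<sigma>t L n
      = sg/\<sigma> * (sqrt (r*(1-u)) * (sqrt (L*P/Pt) * sqrt (Pt/L - \<sigma>t\<^sup>2))) / (1+r) / sg"
    unfolding betaN_def alpha_def gam_def sg_def[symmetric] r_def[symmetric] u_def[symmetric] by (simp add: divide_inverse ac_simps)
  also have "\<dots> = sg/\<sigma> * ((1-u) * (P/\<sigma>)) / (1+r) / sg"
    by (simp only: e2 e3)
  also have "\<dots> = (1-u)*(P/\<sigma>\<^sup>2)/(1+r)"
    using sg s by (simp add: power2_eq_square)
  also have "\<dots> = r*(1-u)/(1+r)"
    by (simp add: r_def snr_def)
  finally show ?thesis .
qed

lemma b2: "(betaN P \<sigma> Pt \<sigma>t L n)\<^sup>2 = (sig P \<sigma> Pt \<sigma>t L n)\<^sup>2 / \<sigma>\<^sup>2 * (r*(1-u)/(1+r)\<^sup>2)"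
proof -
  have "r*(1-u) \<ge> 0" using r_pos u_pos by simp
  then show ?thesis
    unfolding betaN_def r_def[symmetric] u_def[symmetric]
    by (simp add: power_mult_distrib power_divide)
qed

lemma var_step:
  "(fa P \<sigma> Pt \<sigma>t L m)\<^sup>2 * (sig P \<sigma> Pt \<sigma>t L (Suc m))\<^sup>2 + (betaN P \<sigma> Pt \<sigma>t L (Suc m))\<^sup>2 * \<sigma>\<^sup>2
   + (betaN P \<sigma> Pt \<sigma>t L (Suc m) * alpha P Pt L)\<^sup>2 * \<sigma>t\<^sup>2 = (sig P \<sigma> Pt \<sigma>t L (Suc (Suc m)))\<^sup>2"
proof -
  define S where "S = (sig P \<sigma> Pt \<sigma>t L (Suc m))\<^sup>2"
  have a2: "(alpha P Pt L)\<^sup>2 = L*P/Pt" unfolding alpha_def using L P Pt by simp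
  have uu: "L*P/Pt * \<sigma>t\<^sup>2 / \<sigma>\<^sup>2 = u * r"
    using s st Pt by (simp add: u_def r_def snr_def field_simps)
  have "(fa P \<sigma> Pt \<sigma>t L m)\<^sup>2 = (1 - r*(1-u)/(1+r))\<^sup>2" by (simp add: fa_def bag)
  moreover have "(betaN P \<sigma> Pt \<sigma>t L (Suc m))\<^sup>2 * \<sigma>\<^sup>2 = S * (r*(1-u)/(1+r)\<^sup>2)"
    using s by (simp add: b2 S_def)
  moreover have "(betaN P \<sigma> Pt \<sigma>t L (Suc m) * alpha P Pt L)\<^sup>2 * \<sigma>t\<^sup>2 = S * (r*(1-u)/(1+r)\<^sup>2 * (u*r))"
  proof -
    have "(betaN P \<sigma> Pt \<sigma>t L (Suc m) * alpha P Pt L)\<^sup>2 * \<sigma>t\<^sup>2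
        = S * (r*(1-u)/(1+r)\<^sup>2) * (L*P/Pt * \<sigma>t\<^sup>2 / \<sigma>\<^sup>2)"
      by (simp add: power_mult_distrib b2 a2 S_def) (simp add: ac_simps)
    then show ?thesis unfolding uu by simp
  qed
  ultimately have "(fa P \<sigma> Pt \<sigma>t L m)\<^sup>2 * S + (betaN P \<sigma> Pt \<sigma>t L (Suc m))\<^sup>2 * \<sigma>\<^sup>2
   + (betaN P \<sigma> Pt \<sigma>t L (Suc m) * alpha P Pt L)\<^sup>2 * \<sigma>t\<^sup>2
     = S * ((1 - r*(1-u)/(1+r))\<^sup>2 + r*(1-u)/(1+r)\<^sup>2 + r*(1-u)/(1+r)\<^sup>2 * (u*r))"
    by (simp add: algebra_simps)
  also have "\<dots> = S / gfac P \<sigma> Pt \<sigma>t L"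
    using alg_core[OF r_pos u_pos] by (simp add: G_eq)
  finally show ?thesis by (simp add: S_def sig_sq_Suc)
qed

end




context prm begin

lemma var_lin:
  assumes "m < N"
  shows "(\<Sum>i\<in>{1..N}. (cz P \<sigma> Pt \<sigma>t L m i)\<^sup>2 * \<sigma>\<^sup>2) + (\<Sum>j\<in>{1..<N}. (czt P \<sigma> Pt \<sigma>t L m j)\<^sup>2 * \<sigma>t\<^sup>2)
         = (sig P \<sigma> Pt \<sigma>t L (Suc m))\<^sup>2"
  using assms
proof (induction m)
  case 0
  have "(\<Sum>i\<in>{1..N}. (cz P \<sigma> Pt \<sigma>t L 0 i)\<^sup>2 * \<sigma>\<^sup>2) = (\<Sum>i\<in>{1..N}. if i = 1 then \<sigma>\<^sup>2 / P else 0)"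
    by (rule sum.cong) (use P in \<open>auto simp: power_divide\<close>)
  also have "\<dots> = \<sigma>\<^sup>2 / P" using 0 by simp
  finally show ?case using sig1[unfolded One_nat_def] by simp
next
  case (Suc m)
  have IH: "(\<Sum>i\<in>{1..N}. (cz P \<sigma> Pt \<sigma>t L m i)\<^sup>2 * \<sigma>\<^sup>2) + (\<Sum>j\<in>{1..<N}. (czt P \<sigma> Pt \<sigma>t L m j)\<^sup>2 * \<sigma>t\<^sup>2)
         = (sig P \<sigma> Pt \<sigma>t L (Suc m))\<^sup>2"
    by (rule Suc.IH) (use Suc.prems in simp)
  have s1: "(\<Sum>i\<in>{1..N}. (cz P \<sigma> Pt \<sigma>t L (Suc m) i)\<^sup>2 * \<sigma>\<^sup>2)
     = (fa P \<sigma> Pt \<sigma>t L m)\<^sup>2 * (\<Sum>i\<in>{1..N}. (cz P \<sigma> Pt \<sigma>t L m i)\<^sup>2 * \<sigma>\<^sup>2) + (betaN P \<sigma> Pt \<sigma>t L (Suc m))\<^sup>2 * \<sigma>\<^sup>2"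
    unfolding cz.simps
    by (rule sum_delta_sq[where c="cz P \<sigma> Pt \<sigma>t L m" and a="fa P \<sigma> Pt \<sigma>t L m" and k="m+2"])
       (use Suc.prems cz_supp in auto)
  have s2: "(\<Sum>j\<in>{1..<N}. (czt P \<sigma> Pt \<sigma>t L (Suc m) j)\<^sup>2 * \<sigma>t\<^sup>2)
     = (fa P \<sigma> Pt \<sigma>t L m)\<^sup>2 * (\<Sum>j\<in>{1..<N}. (czt P \<sigma> Pt \<sigma>t L m j)\<^sup>2 * \<sigma>t\<^sup>2) + (betaN P \<sigma> Pt \<sigma>t L (Suc m) * alpha P Pt L)\<^sup>2 * \<sigma>t\<^sup>2"
    unfolding czt.simps
    by (rule sum_delta_sq[where c="czt P \<sigma> Pt \<sigma>t L m" and a="fa P \<sigma> Pt \<sigma>t L m" and k="Suc m"])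
       (use Suc.prems czt_supp in auto)
  have "(\<Sum>i\<in>{1..N}. (cz P \<sigma> Pt \<sigma>t L (Suc m) i)\<^sup>2 * \<sigma>\<^sup>2) + (\<Sum>j\<in>{1..<N}. (czt P \<sigma> Pt \<sigma>t L (Suc m) j)\<^sup>2 * \<sigma>t\<^sup>2)
     = (fa P \<sigma> Pt \<sigma>t L m)\<^sup>2 * ((\<Sum>i\<in>{1..N}. (cz P \<sigma> Pt \<sigma>t L m i)\<^sup>2 * \<sigma>\<^sup>2) + (\<Sum>j\<in>{1..<N}. (czt P \<sigma> Pt \<sigma>t L m j)\<^sup>2 * \<sigma>t\<^sup>2))
       + (betaN P \<sigma> Pt \<sigma>t L (Suc m))\<^sup>2 * \<sigma>\<^sup>2 + (betaN P \<sigma> Pt \<sigma>t L (Suc m) * alpha P Pt L)\<^sup>2 * \<sigma>t\<^sup>2"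
    unfolding s1 s2 by (simp add: algebra_simps)
  also have "\<dots> = (sig P \<sigma> Pt \<sigma>t L (Suc (Suc m)))\<^sup>2"
    unfolding IH by (rule var_step)
  finally show ?case .
qed

lemma gam_sq: "(gam P \<sigma> Pt \<sigma>t L n)\<^sup>2 * (sig P \<sigma> Pt \<sigma>t L n)\<^sup>2 = Pt / L - \<sigma>t\<^sup>2"
proof -
  have "L * \<sigma>t\<^sup>2 < Pt" using Ls st by (simp add: snr_def less_divide_eq)
  then have "Pt / L - \<sigma>t\<^sup>2 \<ge> 0" using L by (simp add: field_simps)
  then show ?thesis using sig_pos[of n] unfolding gam_def by (simp add: power_divide)
qed

lemma alias_lin:
  assumes "n \<in> {1..<N}"
  shows "gam P \<sigma> Pt \<sigma>t L n * (ThetaHat id P \<sigma> Pt \<sigma>t L \<theta> v z zt n - \<theta>) + zt n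
     = (\<Sum>i\<in>{1..N}. (gam P \<sigma> Pt \<sigma>t L n * cz P \<sigma> Pt \<sigma>t L (n-1) i) * z i)
     + (\<Sum>j\<in>{1..<N}. (gam P \<sigma> Pt \<sigma>t L n * czt P \<sigma> Pt \<sigma>t L (n-1) j - (if j = n then -1 else 0)) * zt j)"
proof -
  have e: "ThetaHat id P \<sigma> Pt \<sigma>t L \<theta> v z zt n - \<theta>
     = (\<Sum>i\<in>{1..N}. cz P \<sigma> Pt \<sigma>t L (n-1) i * z i) + (\<Sum>j\<in>{1..<N}. czt P \<sigma> Pt \<sigma>t L (n-1) j * zt j)"
    unfolding ThetaHat_def by (rule est_lin) (use P assms in auto)
  have s2: "(\<Sum>j\<in>{1..<N}. (gam P \<sigma> Pt \<sigma>t L n * czt P \<sigma> Pt \<sigma>t L (n-1) j - (if j = n then -1 else 0)) * zt j)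
     = gam P \<sigma> Pt \<sigma>t L n * (\<Sum>j\<in>{1..<N}. czt P \<sigma> Pt \<sigma>t L (n-1) j * zt j) - (-1) * zt n"
    by (rule sum_delta_lin) (use assms in auto)
  show ?thesis unfolding e s2 by (simp add: sum_distrib_left algebra_simps)
qed

lemma alias_var:
  assumes "n \<in> {1..<N}"
  shows "(\<Sum>i\<in>{1..N}. (gam P \<sigma> Pt \<sigma>t L n * cz P \<sigma> Pt \<sigma>t L (n-1) i)\<^sup>2 * \<sigma>\<^sup>2)
     + (\<Sum>j\<in>{1..<N}. (gam P \<sigma> Pt \<sigma>t L n * czt P \<sigma> Pt \<sigma>t L (n-1) j - (if j = n then -1 else 0))\<^sup>2 * \<sigma>t\<^sup>2) = Pt / L"
proof -
  have v: "(\<Sum>i\<in>{1..N}. (cz P \<sigma> Pt \<sigma>t L (n-1) i)\<^sup>2 * \<sigma>\<^sup>2) + (\<Sum>j\<in>{1..<N}. (czt P \<sigma> Pt \<sigma>t L (n-1) j)\<^sup>2 * \<sigma>t\<^sup>2)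
         = (sig P \<sigma> Pt \<sigma>t L n)\<^sup>2"
  proof -
    have a: "n - 1 < N" "Suc (n - 1) = n" using assms by auto
    show ?thesis using var_lin[OF a(1)] unfolding a(2) .
  qed
  have s2: "(\<Sum>j\<in>{1..<N}. (gam P \<sigma> Pt \<sigma>t L n * czt P \<sigma> Pt \<sigma>t L (n-1) j - (if j = n then -1 else 0))\<^sup>2 * \<sigma>t\<^sup>2)
     = (gam P \<sigma> Pt \<sigma>t L n)\<^sup>2 * (\<Sum>j\<in>{1..<N}. (czt P \<sigma> Pt \<sigma>t L (n-1) j)\<^sup>2 * \<sigma>t\<^sup>2) + (-1)\<^sup>2 * \<sigma>t\<^sup>2"
    by (rule sum_delta_sq) (use assms czt_supp in auto)
  have s1: "(\<Sum>i\<in>{1..N}. (gam P \<sigma> Pt \<sigma>t L n * cz P \<sigma> Pt \<sigma>t L (n-1) i)\<^sup>2 * \<sigma>\<^sup>2)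
     = (gam P \<sigma> Pt \<sigma>t L n)\<^sup>2 * (\<Sum>i\<in>{1..N}. (cz P \<sigma> Pt \<sigma>t L (n-1) i)\<^sup>2 * \<sigma>\<^sup>2)"
    by (simp add: sum_distrib_left power_mult_distrib algebra_simps)
  have "(gam P \<sigma> Pt \<sigma>t L n)\<^sup>2 * ((\<Sum>i\<in>{1..N}. (cz P \<sigma> Pt \<sigma>t L (n-1) i)\<^sup>2 * \<sigma>\<^sup>2) + (\<Sum>j\<in>{1..<N}. (czt P \<sigma> Pt \<sigma>t L (n-1) j)\<^sup>2 * \<sigma>t\<^sup>2)) + \<sigma>t\<^sup>2 = Pt / L"
    unfolding v gam_sq by simp
  then show ?thesis unfolding s1 s2 by (simp add: algebra_simps)
qed

end

lemma round_add_int: "round (x + real_of_int k) = round x + k"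
  unfolding round_def by (metis add.commute add.left_commute floor_add_int)

lemma round_diff_int: "round (x - real_of_int k) = round x - k"
  using round_add_int[of x "-k"] by simp

lemma modd_add: "d \<noteq> 0 \<Longrightarrow> modd d (modd d x + y) = modd d (x + y)"
proof -
  assume d: "d \<noteq> 0"
  have "(modd d x + y) / d = (x + y) / d + real_of_int (- round (x / d))"
    using d unfolding modd_def by (simp add: field_simps)
  then have "round ((modd d x + y) / d) = round ((x + y) / d) - round (x / d)"
    by (simp add: round_diff_int)
  then have hR: "round ((modd d x + y) / d) = round ((x + y) / d) - round (x / d)" .
  show ?thesis unfolding modd_def[of d "modd d x + y"] hR unfolding modd_def by (simp add: algebra_simps)
qed

lemma modd_id: "d > 0 \<Longrightarrow> w \<in> {- d / 2..<d / 2} \<Longrightarrow> modd d w = w"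
proof -
  assume d: "d > 0" and w: "w \<in> {- d / 2..<d / 2}"
  have "0 \<le> w / d + 1/2" "w / d + 1/2 < 1" using d w by (auto simp: field_simps)
  then have "round (w / d) = 0" unfolding round_def by (simp add: floor_eq_iff)
  then show ?thesis unfolding modd_def by simp
qed




context prm begin

lemma agree:
  assumes A: "\<forall>n\<in>{1..<N}. gam P \<sigma> Pt \<sigma>t L n * (ThetaHat id P \<sigma> Pt \<sigma>t L \<theta> v z zt n - \<theta>) + zt n
              \<in> {- dmod Pt / 2..<dmod Pt / 2}"
  shows "m < N \<Longrightarrow> est (modd (dmod Pt)) P \<sigma> Pt \<sigma>t L \<theta> v z zt m = est id P \<sigma> Pt \<sigma>t L \<theta> v z zt m"
proof (induction m)
  case 0 then show ?case by simp
next
  case (Suc m)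
  define d where "d = dmod Pt"
  have d: "d > 0" using Pt by (simp add: d_def dmod_def)
  define th where "th = est id P \<sigma> Pt \<sigma>t L \<theta> v z zt m"
  define g where "g = gam P \<sigma> Pt \<sigma>t L (Suc m)"
  have IH: "est (modd d) P \<sigma> Pt \<sigma>t L \<theta> v z zt m = th"
    using Suc.IH[OF Suc_lessD[OF Suc.prems]] unfolding th_def d_def .
  have inr: "g * (th - \<theta>) + zt (Suc m) \<in> {- d / 2..<d / 2}"
  proof -
    have "Suc m \<in> {1..<N}" using Suc.prems by auto
    from A[rule_format, OF this] show ?thesis by (simp add: ThetaHat_def th_def g_def d_def)
  qed
  have eq: "modd d (modd d (g * th + v (Suc m)) + zt (Suc m) - g * \<theta> - v (Suc m)) = g * (th - \<theta>) + zt (Suc m)"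
  proof -
    have e0: "modd d (g * th + v (Suc m)) + zt (Suc m) - g * \<theta> - v (Suc m)
        = modd d (g * th + v (Suc m)) + (zt (Suc m) - g * \<theta> - v (Suc m))" by simp
    have "modd d (modd d (g * th + v (Suc m)) + zt (Suc m) - g * \<theta> - v (Suc m))
        = modd d ((g * th + v (Suc m)) + (zt (Suc m) - g * \<theta> - v (Suc m)))"
      unfolding e0 by (rule modd_add) (use d in simp)
    also have "(g * th + v (Suc m)) + (zt (Suc m) - g * \<theta> - v (Suc m)) = g * (th - \<theta>) + zt (Suc m)"
      by (simp add: algebra_simps)
    finally show ?thesis using modd_id[OF d inr] by simp
  qed
  have L1: "est (modd d) P \<sigma> Pt \<sigma>t L \<theta> v z zt (Suc m)
      = th - betaN P \<sigma> Pt \<sigma>t L (Suc m) * (alpha P Pt L * (g * (th - \<theta>) + zt (Suc m)) + z (Suc (Suc m)))"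
    unfolding est.simps Let_def IH g_def[symmetric] eq ..
  have L2: "est id P \<sigma> Pt \<sigma>t L \<theta> v z zt (Suc m)
      = th - betaN P \<sigma> Pt \<sigma>t L (Suc m) * (alpha P Pt L * (g * (th - \<theta>) + zt (Suc m)) + z (Suc (Suc m)))"
    unfolding est.simps Let_def id_apply th_def[symmetric] g_def[symmetric] by (simp add: algebra_simps)
  show ?case by (rule trans[OF L1[unfolded d_def] L2[symmetric]])
qed

end

lemma pam_diff: "pam M k - pam M j = 2 * (real k - real j) * sqrt (3 / ((real M)\<^sup>2 - 1))"
  unfolding pam_def by (simp add: left_diff_distrib[symmetric])

lemma decode_ok:
  assumes "\<not> (\<forall>j<M. j \<noteq> k \<longrightarrow> \<bar>th - pam M k\<bar> < \<bar>th - pam M j\<bar>)"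
  shows "sqrt (3 / ((real M)\<^sup>2 - 1)) \<le> \<bar>th - pam M k\<bar>"
proof -
  obtain j where j: "j \<noteq> k" "\<bar>th - pam M j\<bar> \<le> \<bar>th - pam M k\<bar>" using assms by auto
  define \<eta> where "\<eta> = sqrt (3 / ((real M)\<^sup>2 - 1))"
  have "\<eta> \<ge> 0 \<or> \<eta> < 0" by auto
  have kj: "\<bar>real k - real j\<bar> \<ge> 1" using j(1) by linarith
  have "2 * \<eta> \<le> \<bar>pam M k - pam M j\<bar>"
  proof (cases "\<eta> \<ge> 0")
    case True
    have "\<bar>pam M k - pam M j\<bar> = 2 * \<bar>real k - real j\<bar> * \<eta>"
      unfolding pam_diff \<eta>_def[symmetric] abs_mult using True by simp
    then show ?thesis using mult_right_mono[OF kj True] by simp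
  next
    case False then show ?thesis by simp
  qed
  also have "\<dots> \<le> \<bar>th - pam M k\<bar> + \<bar>th - pam M j\<bar>" by simp
  finally show ?thesis using j(2) unfolding \<eta>_def by simp
qed




lemma gnorm_scheme:
  fixes c e :: "nat \<Rightarrow> real"
  assumes U: "prob_space U" and V: "prob_space V" and s: "\<sigma> > 0" "\<sigma>t > 0"
  shows "gnorm (U \<Otimes>\<^sub>M (V \<Otimes>\<^sub>M (PiM {1..N} (\<lambda>_. density lborel (normal_density 0 \<sigma>))
                 \<Otimes>\<^sub>M PiM {1..<N} (\<lambda>_. density lborel (normal_density 0 \<sigma>t)))))
     (\<lambda>\<omega>. (\<Sum>i\<in>{1..N}. c i * fst (snd (snd \<omega>)) i) + (\<Sum>j\<in>{1..<N}. e j * snd (snd (snd \<omega>)) j))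
     (sqrt ((\<Sum>i\<in>{1..N}. (c i)\<^sup>2 * \<sigma>\<^sup>2) + (\<Sum>j\<in>{1..<N}. (e j)\<^sup>2 * \<sigma>t\<^sup>2)))"
proof -
  let ?Z = "PiM {1..N} (\<lambda>_. density lborel (normal_density 0 \<sigma>))"
  let ?W = "PiM {1..<N} (\<lambda>_. density lborel (normal_density 0 \<sigma>t))"
  have pZ: "prob_space ?Z" by (rule prob_space_PiM) (use s prob_space_nd in auto)
  have pW: "prob_space ?W" by (rule prob_space_PiM) (use s prob_space_nd in auto)
  have pZW: "prob_space (?Z \<Otimes>\<^sub>M ?W)"
  proof -
    interpret Z: prob_space ?Z by (rule pZ)
    interpret W: prob_space ?W by (rule pW)
    interpret pair_prob_space ?Z ?W ..
    show ?thesis by (rule P.prob_space_axioms)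
  qed
  have pVZW: "prob_space (V \<Otimes>\<^sub>M (?Z \<Otimes>\<^sub>M ?W))"
  proof -
    interpret Z: prob_space V by (rule V)
    interpret W: prob_space "?Z \<Otimes>\<^sub>M ?W" by (rule pZW)
    interpret pair_prob_space V "?Z \<Otimes>\<^sub>M ?W" ..
    show ?thesis by (rule P.prob_space_axioms)
  qed
  have g1: "gnorm ?Z (\<lambda>x. \<Sum>i\<in>{1..N}. c i * x i) (sqrt (\<Sum>i\<in>{1..N}. (c i)\<^sup>2 * \<sigma>\<^sup>2))"
    by (rule gnorm_lincomb_PiM) (use s in auto)
  have g2: "gnorm ?W (\<lambda>x. \<Sum>j\<in>{1..<N}. e j * x j) (sqrt (\<Sum>j\<in>{1..<N}. (e j)\<^sup>2 * \<sigma>t\<^sup>2))"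
    by (rule gnorm_lincomb_PiM) (use s in auto)
  have g3: "gnorm (?Z \<Otimes>\<^sub>M ?W) (\<lambda>p. (\<Sum>i\<in>{1..N}. c i * fst p i) + (\<Sum>j\<in>{1..<N}. e j * snd p j))
      (sqrt ((sqrt (\<Sum>i\<in>{1..N}. (c i)\<^sup>2 * \<sigma>\<^sup>2))\<^sup>2 + (sqrt (\<Sum>j\<in>{1..<N}. (e j)\<^sup>2 * \<sigma>t\<^sup>2))\<^sup>2))"
    by (rule gnorm_pair_add[OF pZ pW g1 g2])
  have g3': "gnorm (?Z \<Otimes>\<^sub>M ?W) (\<lambda>p. (\<Sum>i\<in>{1..N}. c i * fst p i) + (\<Sum>j\<in>{1..<N}. e j * snd p j))
      (sqrt ((\<Sum>i\<in>{1..N}. (c i)\<^sup>2 * \<sigma>\<^sup>2) + (\<Sum>j\<in>{1..<N}. (e j)\<^sup>2 * \<sigma>t\<^sup>2)))"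
    using g3 by (simp add: sum_nonneg)
  note g4 = gnorm_lift_snd[OF V pZW g3']
  show ?thesis using gnorm_lift_snd[OF U pVZW g4] by simp
qed





theorem mainTheorem4:
  fixes P \<sigma> Pt \<sigma>t L R :: real and N M :: nat
  assumes "P > 0" "\<sigma> > 0" "Pt > 0" "\<sigma>t > 0"
    and "0 < L" "L < snr Pt \<sigma>t"
    and "N \<ge> 1" "R > 0" "real M = 2 powr (real N * R)"
  shows "(\<forall>n \<in> {1..<N}.
            measure (scheme_space M N Pt \<sigma> \<sigma>t) (alias_event M N P \<sigma> Pt \<sigma>t L n)
              = 2 * Qfun (sqrt (3 * L)))
       \<and> measure (scheme_space M N Pt \<sigma> \<sigma>t) (error_event M N P \<sigma> Pt \<sigma>t L)
           \<le> real (N - 1) * (2 * Qfun (sqrt (3 * L)))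
             + 2 * Qfun (sqrt (3 * (snr P \<sigma> * gfac P \<sigma> Pt \<sigma>t L ^ (N - 1))
                               / (2 powr (2 * real N * R) - 1)))"
proof -
  interpret prm P \<sigma> Pt \<sigma>t L by unfold_locales (use assms in auto)
  define S where "S = scheme_space M N Pt \<sigma> \<sigma>t"
  define d where "d = dmod Pt"
  have d: "d > 0" using assms(3) by (simp add: d_def dmod_def)
  have M2: "real M > 1"
  proof -
    have "real N * R > 0" using assms(7,8) by simp
    then show ?thesis using assms(9) by simp
  qed
  have U: "prob_space (uniform_count_measure {..<M})"
    by (rule prob_space_uniform_count_measure) (use M2 in auto)
  have V: "prob_space (PiM {1..<N} (\<lambda>_. uniform_measure lborel {- dmod Pt / 2..<dmod Pt / 2}))"
    by (rule prob_space_PiM, rule prob_space_uniform_measure) (use d in \<open>auto simp: d_def\<close>)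
  have S_eq: "S = uniform_count_measure {..<M} \<Otimes>\<^sub>M (PiM {1..<N} (\<lambda>_. uniform_measure lborel {- dmod Pt / 2..<dmod Pt / 2})
     \<Otimes>\<^sub>M (PiM {1..N} (\<lambda>_. density lborel (normal_density 0 \<sigma>))
     \<Otimes>\<^sub>M PiM {1..<N} (\<lambda>_. density lborel (normal_density 0 \<sigma>t))))"
    unfolding S_def scheme_space_def ..
  have gS: "gnorm S (\<lambda>\<omega>. (\<Sum>i\<in>{1..N}. c i * fst (snd (snd \<omega>)) i) + (\<Sum>j\<in>{1..<N}. e j * snd (snd (snd \<omega>)) j))
     (sqrt ((\<Sum>i\<in>{1..N}. (c i)\<^sup>2 * \<sigma>\<^sup>2) + (\<Sum>j\<in>{1..<N}. (e j)\<^sup>2 * \<sigma>t\<^sup>2)))" for c e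
    unfolding S_eq by (rule gnorm_scheme[OF U V]) (use assms in auto)
  have pS: "prob_space S"
  proof -
    let ?Z = "PiM {1..N} (\<lambda>_. density lborel (normal_density 0 \<sigma>))"
    let ?W = "PiM {1..<N} (\<lambda>_. density lborel (normal_density 0 \<sigma>t))"
    let ?V = "PiM {1..<N} (\<lambda>_. uniform_measure lborel {- dmod Pt / 2..<dmod Pt / 2})"
    interpret Z: prob_space ?Z by (rule prob_space_PiM) (use assms prob_space_nd in auto)
    interpret W: prob_space ?W by (rule prob_space_PiM) (use assms prob_space_nd in auto)
    interpret ZW: pair_prob_space ?Z ?W ..
    interpret V: prob_space ?V by (rule V)
    interpret VZW: pair_prob_space ?V "?Z \<Otimes>\<^sub>M ?W" ..
    interpret U: prob_space "uniform_count_measure {..<M}" by (rule U)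
    interpret UVZW: pair_prob_space "uniform_count_measure {..<M}" "?V \<Otimes>\<^sub>M (?Z \<Otimes>\<^sub>M ?W)" ..
    show ?thesis unfolding S_eq by (rule UVZW.P.prob_space_axioms)
  qed
  interpret S: prob_space S by (rule pS)
  define Xa where "Xa n \<omega> = (\<Sum>i\<in>{1..N}. (gam P \<sigma> Pt \<sigma>t L n * cz P \<sigma> Pt \<sigma>t L (n-1) i) * fst (snd (snd \<omega>)) i)
     + (\<Sum>j\<in>{1..<N}. (gam P \<sigma> Pt \<sigma>t L n * czt P \<sigma> Pt \<sigma>t L (n-1) j - (if j = n then -1 else 0)) * snd (snd (snd \<omega>)) j)"
    for n and \<omega> :: "nat \<times> (nat \<Rightarrow> real) \<times> (nat \<Rightarrow> real) \<times> (nat \<Rightarrow> real)"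
  have alias_eq: "alias_event M N P \<sigma> Pt \<sigma>t L n = {\<omega>\<in>space S. Xa n \<omega> \<notin> {- d / 2..<d / 2}}"
    if n: "n \<in> {1..<N}" for n
    unfolding alias_event_def S_def[symmetric] d_def[symmetric]
    by (auto simp: Xa_def alias_lin[OF n] split: prod.splits)
  have gXa: "gnorm S (Xa n) (sqrt (Pt / L))" if n: "n \<in> {1..<N}" for n
    using gS[of "\<lambda>i. gam P \<sigma> Pt \<sigma>t L n * cz P \<sigma> Pt \<sigma>t L (n-1) i"
      "\<lambda>j. gam P \<sigma> Pt \<sigma>t L n * czt P \<sigma> Pt \<sigma>t L (n-1) j - (if j = n then -1 else 0)"]
    unfolding alias_var[OF n] Xa_def[abs_def] .
  have ratio1: "(d / 2) / sqrt (Pt / L) = sqrt (3 * L)"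
  proof -
    have "d / 2 = sqrt (3 * Pt)"
    proof -
      have "sqrt (12 * Pt) = sqrt (2\<^sup>2 * (3 * Pt))" by simp
      also have "\<dots> = sqrt (2\<^sup>2) * sqrt (3 * Pt)" by (rule real_sqrt_mult)
      also have "\<dots> = 2 * sqrt (3 * Pt)" by simp
      finally show ?thesis by (simp add: d_def dmod_def)
    qed
    then show ?thesis using assms(3,5) by (simp add: real_sqrt_divide[symmetric] field_simps)
  qed
  have alias_prob: "measure S (alias_event M N P \<sigma> Pt \<sigma>t L n) = 2 * Qfun (sqrt (3 * L))"
    if n: "n \<in> {1..<N}" for n
  proof -
    have "sqrt (Pt / L) > 0" using assms(3,5) by simp
    then show ?thesis unfolding alias_eq[OF n] using S.gnorm_tails(1)[OF gXa[OF n] _ _, of "d/2"] d ratio1 by simp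
  qed
  have alias_sets: "alias_event M N P \<sigma> Pt \<sigma>t L n \<in> sets S" if n: "n \<in> {1..<N}" for n
  proof -
    have m: "Xa n \<in> borel_measurable S" using gnorm_meas[OF gXa[OF n]] .
    have "{\<omega>\<in>space S. Xa n \<omega> \<notin> {- d / 2..<d / 2}} = Xa n -` (- {- d / 2..<d / 2}) \<inter> space S" by auto
    also have "\<dots> \<in> sets S" by (rule measurable_sets[OF m]) auto
    finally show ?thesis unfolding alias_eq[OF n] .
  qed
  define Ye where "Ye \<omega> = (\<Sum>i\<in>{1..N}. cz P \<sigma> Pt \<sigma>t L (N-1) i * fst (snd (snd \<omega>)) i)
     + (\<Sum>j\<in>{1..<N}. czt P \<sigma> Pt \<sigma>t L (N-1) j * snd (snd (snd \<omega>)) j)"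
    for \<omega> :: "nat \<times> (nat \<Rightarrow> real) \<times> (nat \<Rightarrow> real) \<times> (nat \<Rightarrow> real)"
  define \<eta> where "\<eta> = sqrt (3 / ((real M)\<^sup>2 - 1))"
  define B where "B = {\<omega>\<in>space S. \<eta> \<le> \<bar>Ye \<omega>\<bar>}"
  have N1: "N - 1 < N" "Suc (N - 1) = N" using assms(7) by auto
  have gYe: "gnorm S Ye (sig P \<sigma> Pt \<sigma>t L N)"
  proof -
    have "gnorm S Ye (sqrt ((sig P \<sigma> Pt \<sigma>t L N)\<^sup>2))"
      using gS[of "cz P \<sigma> Pt \<sigma>t L (N-1)" "czt P \<sigma> Pt \<sigma>t L (N-1)"]
      unfolding var_lin[OF N1(1)] N1(2) Ye_def[abs_def] .
    then show ?thesis using sig_pos[of N] by simp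
  qed
  have B_sets: "B \<in> sets S"
  proof -
    have m: "Ye \<in> borel_measurable S" using gnorm_meas[OF gYe] .
    have m2: "(\<lambda>\<omega>. \<bar>Ye \<omega>\<bar>) \<in> borel_measurable S" using m by measurable
    have "B = (\<lambda>\<omega>. \<bar>Ye \<omega>\<bar>) -` {\<eta>..} \<inter> space S" by (auto simp: B_def)
    also have "\<dots> \<in> sets S" by (rule measurable_sets[OF m2]) auto
    finally show ?thesis .
  qed
  have \<eta>pos: "\<eta> > 0"
  proof -
    have "(real M)\<^sup>2 > 1" using M2 by (simp add: one_less_power)
    then show ?thesis by (simp add: \<eta>_def)
  qed
  have B_prob: "measure S B = 2 * Qfun (\<eta> / sig P \<sigma> Pt \<sigma>t L N)"
    unfolding B_def by (rule S.gnorm_tails(2)[OF gYe sig_pos \<eta>pos])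
  have incl: "error_event M N P \<sigma> Pt \<sigma>t L \<subseteq> (\<Union>n\<in>{1..<N}. alias_event M N P \<sigma> Pt \<sigma>t L n) \<union> B"
  proof
    fix \<omega> assume \<omega>: "\<omega> \<in> error_event M N P \<sigma> Pt \<sigma>t L"
    obtain k v z zt where \<omega>eq: "\<omega> = (k, v, z, zt)" by (cases \<omega>) auto
    have sp: "\<omega> \<in> space S" using \<omega> by (simp add: error_event_def S_def)
    show "\<omega> \<in> (\<Union>n\<in>{1..<N}. alias_event M N P \<sigma> Pt \<sigma>t L n) \<union> B"
    proof (cases "\<omega> \<in> (\<Union>n\<in>{1..<N}. alias_event M N P \<sigma> Pt \<sigma>t L n)")
      case True then show ?thesis by blast
    next
      case False
      have A: "\<forall>n\<in>{1..<N}. gam P \<sigma> Pt \<sigma>t L n * (ThetaHat id P \<sigma> Pt \<sigma>t L (pam M k) v z zt n - pam M k) + zt n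
              \<in> {- dmod Pt / 2..<dmod Pt / 2}"
        using False sp unfolding alias_event_def \<omega>eq S_def by auto
      have ag: "est (modd (dmod Pt)) P \<sigma> Pt \<sigma>t L (pam M k) v z zt (N - 1) = est id P \<sigma> Pt \<sigma>t L (pam M k) v z zt (N - 1)"
        by (rule agree[OF A N1(1)])
      have err: "\<not> (\<forall>j<M. j \<noteq> k \<longrightarrow> \<bar>ThetaHat (modd (dmod Pt)) P \<sigma> Pt \<sigma>t L (pam M k) v z zt N - pam M k\<bar>
                 < \<bar>ThetaHat (modd (dmod Pt)) P \<sigma> Pt \<sigma>t L (pam M k) v z zt N - pam M j\<bar>)"
        using \<omega> unfolding error_event_def \<omega>eq by (simp add: Let_def)
      have "\<eta> \<le> \<bar>ThetaHat (modd (dmod Pt)) P \<sigma> Pt \<sigma>t L (pam M k) v z zt N - pam M k\<bar>"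
        unfolding \<eta>_def by (rule decode_ok[OF err])
      also have "ThetaHat (modd (dmod Pt)) P \<sigma> Pt \<sigma>t L (pam M k) v z zt N - pam M k = Ye \<omega>"
        unfolding ThetaHat_def ag Ye_def \<omega>eq fst_conv snd_conv by (rule est_lin[OF assms(1) N1(1)])
      finally have "\<eta> \<le> \<bar>Ye \<omega>\<bar>" .
      then show ?thesis using sp by (simp add: B_def)
    qed
  qed
  have m_err: "measure S (error_event M N P \<sigma> Pt \<sigma>t L) \<le> measure S ((\<Union>n\<in>{1..<N}. alias_event M N P \<sigma> Pt \<sigma>t L n) \<union> B)"
  proof (cases "error_event M N P \<sigma> Pt \<sigma>t L \<in> sets S")
    case True
    show ?thesis by (rule S.finite_measure_mono[OF incl]) (use alias_sets B_sets in auto)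
  next
    case False then show ?thesis by (simp add: measure_notin_sets)
  qed
  also have "\<dots> \<le> measure S (\<Union>n\<in>{1..<N}. alias_event M N P \<sigma> Pt \<sigma>t L n) + measure S B"
    by (rule measure_Un_le) (use alias_sets B_sets in auto)
  also have "measure S (\<Union>n\<in>{1..<N}. alias_event M N P \<sigma> Pt \<sigma>t L n) \<le> (\<Sum>n\<in>{1..<N}. measure S (alias_event M N P \<sigma> Pt \<sigma>t L n))"
    by (rule S.finite_measure_subadditive_finite) (use alias_sets in auto)
  also have "(\<Sum>n\<in>{1..<N}. measure S (alias_event M N P \<sigma> Pt \<sigma>t L n)) = real (N - 1) * (2 * Qfun (sqrt (3 * L)))"
    using alias_prob by simp
  finally have main2: "measure S (error_event M N P \<sigma> Pt \<sigma>t L) \<le> real (N - 1) * (2 * Qfun (sqrt (3 * L))) + 2 * Qfun (\<eta> / sig P \<sigma> Pt \<sigma>t L N)"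
    using B_prob by simp
  have ratio2: "\<eta> / sig P \<sigma> Pt \<sigma>t L N = sqrt (3 * (snr P \<sigma> * gfac P \<sigma> Pt \<sigma>t L ^ (N - 1))
                               / (2 powr (2 * real N * R) - 1))"
  proof -
    define G where "G = gfac P \<sigma> Pt \<sigma>t L"
    have G: "G > 0" using G_pos by (simp add: G_def)
    have Gp: "G powr (1 - real N) = inverse (G ^ (N - 1))"
    proof -
      have e: "1 - real N = - real (N - 1)" using assms(7) by simp
      have "G powr (1 - real N) = inverse (G powr real (N - 1))" unfolding e by (rule powr_minus)
      also have "G powr real (N - 1) = G ^ (N - 1)" using G by (rule powr_realpow)
      finally show ?thesis .
    qed
    have M2': "(real M)\<^sup>2 = 2 powr (2 * real N * R)"
      unfolding assms(9) power2_eq_square by (simp add: powr_add[symmetric] ac_simps)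
    have Mpos: "(real M)\<^sup>2 - 1 > 0" using M2 by (simp add: one_less_power)
    have "\<eta> / sig P \<sigma> Pt \<sigma>t L N = sqrt (3 / ((real M)\<^sup>2 - 1) / (inverse r * G powr (1 - real N)))"
      unfolding \<eta>_def sig_def r_def G_def by (simp only: real_sqrt_divide)
    also have "3 / ((real M)\<^sup>2 - 1) / (inverse r * G powr (1 - real N)) = 3 * (r * G ^ (N - 1)) / ((real M)\<^sup>2 - 1)"
      unfolding Gp using r_pos G Mpos by (simp add: field_simps)
    finally show ?thesis unfolding M2' r_def G_def .
  qed
  show ?thesis
  proof (intro conjI ballI)
    fix n assume "n \<in> {1..<N}"
    then show "measure (scheme_space M N Pt \<sigma> \<sigma>t) (alias_event M N P \<sigma> Pt \<sigma>t L n) = 2 * Qfun (sqrt (3 * L))"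
      using alias_prob unfolding S_def by blast
  next
    show "measure (scheme_space M N Pt \<sigma> \<sigma>t) (error_event M N P \<sigma> Pt \<sigma>t L)
           \<le> real (N - 1) * (2 * Qfun (sqrt (3 * L)))
             + 2 * Qfun (sqrt (3 * (snr P \<sigma> * gfac P \<sigma> Pt \<sigma>t L ^ (N - 1))
                               / (2 powr (2 * real N * R) - 1)))"
      using main2 unfolding ratio2 S_def .
  qed
qed



end
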